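(* Let $K=\operatorname{cone}\{e_1,\dots,e_m\}\subset\mathbb{R}^m$ be a simplicial cone, and suppose there are pairwise distinct indices $i,j,k\in\{1,\dots,m\}$ with $\langle e_i,e_j\rangle<0$, $\langle e_i,e_k\rangle<0$ and $\langle e_j,e_k\rangle<0$. Then there is no proper cone $L$ such that $K$ is an $L$-isotone projection set.
   Context: $\mathbb{R}^m$ carries the standard inner product. A simplicial cone is $\operatorname{cone}\{e_1,\dots,e_m\}=\{\sum t^ie_i:t^i\ge0\}$ with $e_1,\dots,e_m$ linearly independent. A proper cone is a closed convex cone $L$ that is pointed and generating ($L-L=\mathbb{R}^m$). $x\le_L y$ means $y-x\in L$. $K$ is an $L$-isotone projection set if $x\le_L y$ implies $P_Kx\le_L P_Ky$, where $P_K$ is the metric projection onto $K$. *)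

theory Defs
  imports "HOL-Analysis.Analysis"
begin

definition gen_cone :: "('m::finite \<Rightarrow> 'a::real_vector) \<Rightarrow> 'a set" where
  "gen_cone e = {(\<Sum>i\<in>UNIV. t i *\<^sub>R e i) | t. \<forall>i. t i \<ge> 0}"

definition simplicial_generators :: "('m::finite \<Rightarrow> real^'m) \<Rightarrow> bool" where
  "simplicial_generators e \<longleftrightarrow> inj e \<and> independent (range e)"

definition proper_cone :: "'a::real_normed_vector set \<Rightarrow> bool" where
  "proper_cone L \<longleftrightarrow> closed L \<and> convex L \<and> cone L \<and>
     L \<inter> uminus ` L = {0} \<and> {x - y | x y. x \<in> L \<and> y \<in> L} = UNIV"

definition cone_le :: "'a::real_vector set \<Rightarrow> 'a \<Rightarrow> 'a \<Rightarrow> bool" where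
  "cone_le L x y \<longleftrightarrow> y - x \<in> L"

definition isotone_projection_set :: "'a::euclidean_space set \<Rightarrow> 'a set \<Rightarrow> bool" where
  "isotone_projection_set L K \<longleftrightarrow>
     (\<forall>x y. cone_le L x y \<longrightarrow> cone_le L (closest_point K x) (closest_point K y))"

end

theory Submission
  imports Defs
begin

lemma proj_ray:
  fixes e :: "'m::finite \<Rightarrow> real^'m" and y :: "real^'m"
  assumes a0: "e i \<noteq> 0" and ya: "y \<bullet> e i \<ge> 0"
    and hl: "\<And>l. y \<bullet> e l - (y \<bullet> e i)/(e i \<bullet> e i) * (e i \<bullet> e l) \<le> 0"
  shows "closest_point (gen_cone e) y = ((y \<bullet> e i)/(e i \<bullet> e i)) *\<^sub>R e i"
proof -
  define t where "t = (y \<bullet> e i)/(e i \<bullet> e i)"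
  define p where "p = t *\<^sub>R e i"
  have n2: "e i \<bullet> e i > 0" using a0 by simp
  have t0: "t \<ge> 0" unfolding t_def using ya n2 by simp
  have pK: "p \<in> gen_cone e"
  proof -
    have "(\<Sum>l\<in>UNIV. (if l = i then t else 0) *\<^sub>R e l) = p"
    proof -
      have "\<And>l. (if l = i then t else 0) *\<^sub>R e l = (if l = i then t *\<^sub>R e l else 0)" by simp
      thus ?thesis unfolding p_def by (simp add: sum.delta)
    qed
    moreover have "\<forall>l. (if l = i then t else 0) \<ge> 0" using t0 by simp
    ultimately show ?thesis unfolding gen_cone_def mem_Collect_eq
      by (intro exI[of _ "\<lambda>l. if l = i then t else 0"]) simp
  qed
  have yp_el: "(y - p) \<bullet> e l \<le> 0" for l
    using hl[of l] unfolding p_def t_def by (simp add: inner_diff_left)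
  have yp_p: "(y - p) \<bullet> p = 0"
    unfolding p_def t_def using n2 by (simp add: inner_diff_left field_simps)
  have yp_z: "(y - p) \<bullet> z \<le> 0" if zK: "z \<in> gen_cone e" for z
  proof -
    obtain c where z: "z = (\<Sum>l\<in>UNIV. c l *\<^sub>R e l)" and c: "\<forall>l. c l \<ge> 0"
      using zK unfolding gen_cone_def by blast
    have "(y - p) \<bullet> z = (\<Sum>l\<in>UNIV. c l * ((y - p) \<bullet> e l))"
      unfolding z by (simp add: inner_sum_right)
    also have "\<dots> \<le> 0"
      by (rule sum_nonpos) (simp add: c mult_nonneg_nonpos yp_el)
    finally show ?thesis .
  qed
  have strict: "dist y p < dist y z" if "z \<in> gen_cone e" "z \<noteq> p" for z
  proof -
    have "(dist y z)\<^sup>2 = (norm ((y - p) + (p - z)))\<^sup>2" by (simp add: dist_norm)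
    also have "\<dots> = (norm (y - p))\<^sup>2 + (norm (p - z))\<^sup>2 + 2 * ((y - p) \<bullet> (p - z))"
      by (simp add: power2_norm_eq_inner inner_add_left inner_add_right inner_diff_left inner_diff_right inner_commute algebra_simps)
    also have "(y - p) \<bullet> (p - z) = - ((y - p) \<bullet> z)" using yp_p by (simp add: inner_diff_right)
    finally have eq: "(dist y z)\<^sup>2 = (dist y p)\<^sup>2 + (norm (p - z))\<^sup>2 - 2 * ((y - p) \<bullet> z)"
      by (simp add: dist_norm)
    have "norm (p - z) > 0" using that by simp
    hence "(dist y p)\<^sup>2 < (dist y z)\<^sup>2" using eq yp_z[OF that(1)] by (smt (verit) zero_less_power)
    thus ?thesis by (simp add: power_less_imp_less_base)
  qed
  have "closest_point (gen_cone e) y = p"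
    unfolding closest_point_def
  proof (rule some_equality)
    show "p \<in> gen_cone e \<and> (\<forall>z\<in>gen_cone e. dist y p \<le> dist y z)"
      using pK strict by (metis order.order_iff_strict)
  next
    fix x assume "x \<in> gen_cone e \<and> (\<forall>z\<in>gen_cone e. dist y x \<le> dist y z)"
    thus "x = p" using pK strict by (metis not_less)
  qed
  thus ?thesis unfolding p_def t_def .
qed

lemma exists_dual:
  fixes e :: "'m::finite \<Rightarrow> real^'m"
  assumes "simplicial_generators e"
  shows "\<exists>x. \<forall>l. x \<bullet> e l = f l"
proof -
  have inj: "inj e" and ind: "independent (range e)"
    using assms unfolding simplicial_generators_def by auto
  have "card (range e) = CARD('m)" using inj by (simp add: card_image)
  hence "(UNIV :: (real^'m) set) \<subseteq> span (range e)"
    by (intro card_ge_dim_independent) (auto simp: ind dim_UNIV)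
  hence sp: "span (range e) = UNIV" by auto
  define g where "g = (\<lambda>x::real^'m. \<chi> l. x \<bullet> e l)"
  have lin: "linear g" unfolding g_def
    by (rule linearI) (auto simp: vec_eq_iff inner_add_left)
  have "inj g"
    unfolding linear_injective_0[OF lin]
  proof (intro allI impI)
    fix x assume "g x = 0"
    hence h: "\<forall>l. x \<bullet> e l = 0" unfolding g_def by (simp add: vec_eq_iff)
    have "orthogonal x x"
      by (rule orthogonal_to_span[where S="range e"]) (auto simp: sp orthogonal_def h)
    thus "x = 0" by (simp add: orthogonal_def)
  qed
  hence "surj g" using linear_injective_imp_surjective[OF lin] by simp
  then obtain x where "g x = (\<chi> l. f l)" by (metis surjD)
  hence "\<forall>l. x \<bullet> e l = f l" unfolding g_def by (simp add: vec_eq_iff)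
  thus ?thesis by blast
qed

lemma cone_scale: "cone L \<Longrightarrow> x \<in> L \<Longrightarrow> c \<ge> 0 \<Longrightarrow> c *\<^sub>R x \<in> L"
  unfolding cone_def by blast

lemma gen_nonzero:
  fixes e :: "'m::finite \<Rightarrow> real^'m"
  assumes "simplicial_generators e"
  shows "e i \<noteq> 0"
proof
  assume "e i = 0"
  hence "0 \<in> range e" by (metis rangeI)
  thus False using assms dependent_zero unfolding simplicial_generators_def by blast
qed

lemma key:
  fixes e :: "'m::finite \<Rightarrow> real^'m"
  assumes sg: "simplicial_generators e" and pc: "proper_cone L"
    and iso: "isotone_projection_set L (gen_cone e)" and vL: "v \<in> L"
  shows "(v \<bullet> e i) *\<^sub>R e i \<in> L"
proof -
  define a where "a = e i"
  have a0: "a \<noteq> 0" unfolding a_def using gen_nonzero[OF sg] .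
  define n2 where "n2 = a \<bullet> a"
  have n2: "n2 > 0" unfolding n2_def using a0 by simp
  have cL: "cone L" using pc unfolding proper_cone_def by auto
  obtain x0 where x0: "\<And>l. x0 \<bullet> e l = (if l = i then n2 else a \<bullet> e l - 1)"
    using exists_dual[OF sg, of "\<lambda>l. if l = i then n2 else a \<bullet> e l - 1"] by blast
  define c where "c l = v \<bullet> e l - (v \<bullet> a)/n2 * (a \<bullet> e l)" for l
  define M where "M = (\<Sum>l\<in>UNIV. \<bar>c l\<bar>) + \<bar>v \<bullet> a\<bar>/n2 + 1"
  have cM: "\<bar>c l\<bar> < M" for l
  proof -
    have "\<bar>c l\<bar> \<le> (\<Sum>l\<in>UNIV. \<bar>c l\<bar>)" by (rule member_le_sum) auto
    moreover have "\<bar>v \<bullet> a\<bar>/n2 \<ge> 0" using n2 by simp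
    ultimately show ?thesis unfolding M_def by linarith
  qed
  have vM: "\<bar>v \<bullet> a\<bar>/n2 < M"
  proof -
    have "(\<Sum>l\<in>UNIV. \<bar>c l\<bar>) \<ge> 0" by (rule sum_nonneg) simp
    thus ?thesis unfolding M_def by linarith
  qed
  have M0: "M > 0" using cM[of i] by simp
  define s where "s = 1 / M"
  have s0: "s > 0" unfolding s_def using M0 by simp
  define y where "y = x0 + s *\<^sub>R v"
  have x0a: "x0 \<bullet> a = n2" using x0[of i] unfolding a_def by simp
  have ra: "x0 \<bullet> a / n2 = 1" using x0a n2 by simp
  have P0: "closest_point (gen_cone e) x0 = 1 *\<^sub>R a"
  proof -
    have "closest_point (gen_cone e) x0 = ((x0 \<bullet> e i)/(e i \<bullet> e i)) *\<^sub>R e i"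
    proof (rule proj_ray)
      show "e i \<noteq> 0" using a0 a_def by simp
      show "0 \<le> x0 \<bullet> e i" using x0a n2 a_def by simp
      fix l show "x0 \<bullet> e l - x0 \<bullet> e i / (e i \<bullet> e i) * (e i \<bullet> e l) \<le> 0"
        using ra x0[of l] unfolding a_def n2_def by (cases "l = i") auto
    qed
    thus ?thesis using ra unfolding a_def n2_def by simp
  qed
  have sv: "s * \<bar>v \<bullet> a\<bar> < n2"
  proof -
    have "\<bar>v \<bullet> a\<bar> / n2 < M" by (rule vM)
    hence "\<bar>v \<bullet> a\<bar> < M * n2" using n2 by (simp add: divide_less_eq mult.commute)
    thus ?thesis unfolding s_def using M0 by (simp add: divide_less_eq mult.commute)
  qed
  have ya: "y \<bullet> a = n2 + s * (v \<bullet> a)" unfolding y_def using x0a by (simp add: inner_add_left)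
  have "s * (- \<bar>v \<bullet> a\<bar>) \<le> s * (v \<bullet> a)" using s0 by (intro mult_left_mono) auto
  hence yapos: "y \<bullet> a \<ge> 0" using ya sv by simp
  have ry: "y \<bullet> a / n2 = 1 + s * (v \<bullet> a) / n2" using ya n2 by (simp add: field_simps)
  have P1: "closest_point (gen_cone e) y = (1 + s * (v \<bullet> a) / n2) *\<^sub>R a"
  proof -
    have "closest_point (gen_cone e) y = ((y \<bullet> e i)/(e i \<bullet> e i)) *\<^sub>R e i"
    proof (rule proj_ray)
      show "e i \<noteq> 0" using a0 a_def by simp
      show "0 \<le> y \<bullet> e i" using yapos a_def by simp
      fix l
      have eq: "y \<bullet> e l - y \<bullet> e i / (e i \<bullet> e i) * (e i \<bullet> e l)
          = (x0 \<bullet> e l - a \<bullet> e l) + s * c l"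
        using ry unfolding y_def c_def a_def[symmetric] n2_def[symmetric]
        by (simp add: inner_add_left algebra_simps)
      show "y \<bullet> e l - y \<bullet> e i / (e i \<bullet> e i) * (e i \<bullet> e l) \<le> 0"
      proof (cases "l = i")
        case True
        have "c l = 0" unfolding c_def True a_def[symmetric] n2_def[symmetric] using n2 by simp
        thus ?thesis using eq x0[of l] True a_def n2_def by simp
      next
        case False
        have "s * \<bar>c l\<bar> < 1" using cM[of l] M0 unfolding s_def by (simp add: divide_less_eq)
        moreover have "s * c l \<le> s * \<bar>c l\<bar>" using s0 by (simp add: mult_left_mono)
        ultimately have "s * c l < 1" by linarith
        thus ?thesis using eq x0[of l] False by simp
      qed
    qed
    thus ?thesis using ry unfolding a_def n2_def by simp
  qed
  have "cone_le L x0 y" unfolding cone_le_def y_def using cone_scale[OF cL vL, of s] s0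
    by simp
  hence "closest_point (gen_cone e) y - closest_point (gen_cone e) x0 \<in> L"
    using iso unfolding isotone_projection_set_def cone_le_def by blast
  hence "(s * (v \<bullet> a) / n2) *\<^sub>R a \<in> L" unfolding P0 P1 by (simp add: algebra_simps)
  moreover have "n2 / s \<ge> 0" using n2 s0 by simp
  ultimately have "(n2 / s) *\<^sub>R ((s * (v \<bullet> a) / n2) *\<^sub>R a) \<in> L"
    by (rule cone_scale[OF cL])
  thus ?thesis using n2 s0 unfolding a_def by simp
qed

lemma sign_facts:
  fixes e :: "'m::finite \<Rightarrow> real^'m"
  assumes sg: "simplicial_generators e" and pc: "proper_cone L"
    and iso: "isotone_projection_set L (gen_cone e)"
  shows "(e i \<in> L \<and> - e i \<notin> L \<and> (\<forall>v\<in>L. v \<bullet> e i \<ge> 0)) \<or> (- e i \<in> L \<and> e i \<notin> L \<and> (\<forall>v\<in>L. v \<bullet> e i \<le> 0))"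
proof -
  have a0: "e i \<noteq> 0" using gen_nonzero[OF sg] .
  have cL: "cone L" and pt: "L \<inter> uminus ` L = {0}" and gen: "{x - y | x y. x \<in> L \<and> y \<in> L} = UNIV"
    using pc unfolding proper_cone_def by auto
  have pos: "e i \<in> L" if "v \<in> L" "v \<bullet> e i > 0" for v
  proof -
    have "(1 / (v \<bullet> e i)) *\<^sub>R ((v \<bullet> e i) *\<^sub>R e i) \<in> L"
    proof -
      have "1 / (v \<bullet> e i) \<ge> 0" using that(2) by simp
      thus ?thesis using cone_scale[OF cL key[OF sg pc iso that(1), of i]] by blast
    qed
    thus ?thesis using that(2) by simp
  qed
  have neg: "- e i \<in> L" if "v \<in> L" "v \<bullet> e i < 0" for v
  proof -
    have "(-1 / (v \<bullet> e i)) *\<^sub>R ((v \<bullet> e i) *\<^sub>R e i) \<in> L"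
    proof -
      have "-1 / (v \<bullet> e i) \<ge> 0" using that(2) by (simp add: divide_nonpos_neg)
      thus ?thesis using cone_scale[OF cL key[OF sg pc iso that(1), of i]] by blast
    qed
    thus ?thesis using that(2) by simp
  qed
  have notboth: "\<not> (e i \<in> L \<and> - e i \<in> L)"
  proof
    assume h: "e i \<in> L \<and> - e i \<in> L"
    hence "e i \<in> uminus ` L" by (metis image_eqI minus_minus)
    hence "e i \<in> L \<inter> uminus ` L" using h by blast
    thus False using pt a0 by blast
  qed
  have "e i \<in> {x - y | x y. x \<in> L \<and> y \<in> L}" using gen by simp
  then obtain x y where xy: "e i = x - y" "x \<in> L" "y \<in> L" by blast
  have "e i \<bullet> e i > 0" using a0 by simp
  hence "(x - y) \<bullet> e i \<noteq> 0" using xy(1) by simp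
  hence "x \<bullet> e i \<noteq> 0 \<or> y \<bullet> e i \<noteq> 0" by (auto simp: inner_diff_left)
  hence ex: "e i \<in> L \<or> - e i \<in> L"
  proof
    assume "x \<bullet> e i \<noteq> 0"
    hence "x \<bullet> e i > 0 \<or> x \<bullet> e i < 0" by linarith
    thus ?thesis using pos[OF xy(2)] neg[OF xy(2)] by blast
  next
    assume "y \<bullet> e i \<noteq> 0"
    hence "y \<bullet> e i > 0 \<or> y \<bullet> e i < 0" by linarith
    thus ?thesis using pos[OF xy(3)] neg[OF xy(3)] by blast
  qed
  show ?thesis
  proof (cases "e i \<in> L")
    case True
    hence "- e i \<notin> L" using notboth by blast
    hence "\<forall>v\<in>L. v \<bullet> e i \<ge> 0" using neg by force
    thus ?thesis using True \<open>- e i \<notin> L\<close> by blast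
  next
    case False
    hence "- e i \<in> L" using ex by blast
    moreover have "\<forall>v\<in>L. v \<bullet> e i \<le> 0" using pos False by force
    ultimately show ?thesis using False by blast
  qed
qed

theorem corollary2:
  fixes e :: "'m::finite \<Rightarrow> real^'m" and i j k :: 'm
  assumes "simplicial_generators e"
    and "i \<noteq> j" "i \<noteq> k" "j \<noteq> k"
    and "e i \<bullet> e j < 0" "e i \<bullet> e k < 0" "e j \<bullet> e k < 0"
  shows "\<not> (\<exists>L. proper_cone L \<and> isotone_projection_set L (gen_cone e))"
proof
  assume "\<exists>L. proper_cone L \<and> isotone_projection_set L (gen_cone e)"
  then obtain L where pc: "proper_cone L" and iso: "isotone_projection_set L (gen_cone e)" by blast
  note S = sign_facts[OF assms(1) pc iso]
  have pair: "(e a \<in> L) = (e b \<notin> L)" if "e a \<bullet> e b < 0" for a b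
  proof -
    have ba: "e b \<bullet> e a < 0" using that by (simp add: inner_commute)
    show ?thesis
    proof
      assume "e a \<in> L"
      hence A: "\<forall>v\<in>L. v \<bullet> e a \<ge> 0" using S[of a] by blast
      show "e b \<notin> L"
      proof
        assume "e b \<in> L"
        hence "e b \<bullet> e a \<ge> 0" using A by blast
        thus False using ba by simp
      qed
    next
      assume "e b \<notin> L"
      hence B: "- e b \<in> L" using S[of b] by blast
      show "e a \<in> L"
      proof (rule ccontr)
        assume "e a \<notin> L"
        hence "\<forall>v\<in>L. v \<bullet> e a \<le> 0" using S[of a] by blast
        hence "(- e b) \<bullet> e a \<le> 0" using B by blast
        thus False using ba by simp
      qed
    qed
  qed
  have p1: "(e i \<in> L) = (e j \<notin> L)" by (rule pair[OF assms(5)])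
  have p2: "(e i \<in> L) = (e k \<notin> L)" by (rule pair[OF assms(6)])
  have p3: "(e j \<in> L) = (e k \<notin> L)" by (rule pair[OF assms(7)])
  show False using p1 p2 p3 by (cases "e i \<in> L") simp_all
qed

end
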